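(* Insert $2^k$ values one at a time into an initially empty black-white array (BWA). The chronological order in which the nodes of the BWA merge tree are realized is exactly the post-order traversal of that tree. Here a leaf is realized when its value is inserted, and an internal node is realized when the merge it represents is performed.
   Context: A black-white array (BWA) of size $N=2^K$ stores values from a totally ordered set. It has a white array $W[1..N-1]$ and a black array $B[1..N/2-1]$. For $i\ge0$, the segment of rank $i$ of either array is the index block $[2^i,2^{i+1}-1]$. A state variable $\mathtt{total}$ counts stored values and is initially $0$. The rank-$i$ segment is active iff bit $i$ of $\mathtt{total}$ is $1$. Insert$(v)$: if rank 0 is inactive, set $W[1]=v$; otherwise set $B[1]=v$ and perform $\mathrm{merge}(0)$. $\mathrm{merge}(i)$: merge the sorted white and black segments of rank $i$. The result goes into the white rank-$(i+1)$ segment if that segment is inactive. Otherwise it goes into the black rank-$(i+1)$ segment, followed by $\mathrm{merge}(i+1)$. When an insertion completes, $\mathtt{total}$ has increased by one. The BWA merge tree for $2^k$ insertions is the complete binary tree with $2^k$ leaves. Its leaves are the inserted values, from left to right in insertion order, and represent rank-0 segments. Each internal node at height $j$ represents the rank-$j$ segment produced by merging the two segments represented by its children. Post-order traversal visits the left subtree, then the right subtree, then the node. *)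

theory Defs
  imports Main
begin

text \<open>A segment stores pairs (value, insertion index); the index only serves
to identify which inserted values a segment contains (i.e. which tree node it is).\<close>

type_synonym 'a seg = "('a \<times> nat) list"

record 'a bwa =
  W :: "nat \<Rightarrow> 'a seg"
  Bl :: "nat \<Rightarrow> 'a seg"
  total :: nat
  rlog :: "nat set list"      \<comment> \<open>realization log: leaf-index set of each realized node\<close>

fun smerge :: "('a::linorder \<times> nat) list \<Rightarrow> ('a \<times> nat) list \<Rightarrow> ('a \<times> nat) list" where
  "smerge [] ys = ys"
| "smerge xs [] = xs"
| "smerge (x # xs) (y # ys) =
     (if fst x \<le> fst y then x # smerge xs (y # ys) else y # smerge (x # xs) ys)"

function merge_seg :: "nat \<Rightarrow> ('a::linorder) bwa \<Rightarrow> 'a bwa" where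
  "merge_seg i s =
     (let r = smerge (W s i) (Bl s i);
          s' = s\<lparr>rlog := rlog s @ [set (map snd r)]\<rparr>
      in if \<not> bit (total s) (Suc i) then s'\<lparr>W := (W s)(Suc i := r)\<rparr>
         else merge_seg (Suc i) (s'\<lparr>Bl := (Bl s)(Suc i := r)\<rparr>))"
  by pat_completeness auto
termination
proof (relation "measure (\<lambda>(i, s). total s - i)")
  fix i :: nat and s :: "'a bwa" and r s'
  assume "\<not> \<not> bit (total s) (Suc i)"
  then have "2 ^ Suc i \<le> total s"
    by (metis bit_iff_odd div_less even_zero not_le)
  moreover have "Suc i < 2 ^ Suc i" by (rule less_exp)
  ultimately show "((Suc i, s'\<lparr>Bl := (Bl s)(Suc i := r)\<rparr>), (i, s))
       \<in> measure (\<lambda>(i, s). total s - i)" if "s' = s\<lparr>rlog := rlog s @ [set (map snd r)]\<rparr>"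
    using that by simp
qed simp

definition bwa_insert :: "'a::linorder \<Rightarrow> 'a bwa \<Rightarrow> 'a bwa" where
  "bwa_insert v s =
     (let j = total s;
          s1 = s\<lparr>rlog := rlog s @ [{j}]\<rparr>;
          s2 = (if \<not> bit j 0 then s1\<lparr>W := (W s1)(0 := [(v, j)])\<rparr>
                else merge_seg 0 (s1\<lparr>Bl := (Bl s1)(0 := [(v, j)])\<rparr>))
      in s2\<lparr>total := Suc j\<rparr>)"

definition bwa_init :: "'a bwa" where
  "bwa_init = \<lparr>W = (\<lambda>_. []), Bl = (\<lambda>_. []), total = 0, rlog = []\<rparr>"

definition bwa_run :: "'a::linorder list \<Rightarrow> 'a bwa" where
  "bwa_run vs = fold bwa_insert vs bwa_init"

text \<open>BWA merge tree: leaves are insertion indices 0..2^k-1 left to right.\<close>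
datatype mtree = MLeaf nat | MNode mtree mtree

fun mk_tree :: "nat \<Rightarrow> nat \<Rightarrow> mtree" where
  "mk_tree 0 m = MLeaf m"
| "mk_tree (Suc j) m = MNode (mk_tree j (2 * m)) (mk_tree j (2 * m + 1))"

fun leaves :: "mtree \<Rightarrow> nat set" where
  "leaves (MLeaf i) = {i}"
| "leaves (MNode l r) = leaves l \<union> leaves r"

fun postorder :: "mtree \<Rightarrow> mtree list" where
  "postorder (MLeaf i) = [MLeaf i]"
| "postorder (MNode l r) = postorder l @ postorder r @ [MNode l r]"

end

theory Submission
  imports Defs
begin

lemma allbits_mod: "(\<forall>u<b. bit (n::nat) u) \<longleftrightarrow> n mod 2^b = 2^b - 1"
proof (induction b arbitrary: n)
  case 0 then show ?case by simp
next
  case (Suc b)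
  have e: "(\<forall>u<Suc b. bit n u) \<longleftrightarrow> odd n \<and> (\<forall>u<b. bit (n div 2) u)"
    by (auto simp: less_Suc_eq_0_disj bit_Suc bit_0)
  have m: "n mod 2^Suc b = n mod 2 + 2 * ((n div 2) mod 2^b)"
    by (metis add.commute mod_mult2_eq power_Suc)
  have p: "(2::nat)^b \<ge> 1" by simp
  have "n mod 2 < 2" by simp
  have q: "(n div 2) mod 2^b < 2^b" by simp
  have r: "odd n \<longleftrightarrow> n mod 2 = 1" by presburger
  have gen: "\<And>P a r::nat. P \<ge> 1 \<Longrightarrow> r < 2 \<Longrightarrow> (r = 1 \<and> a = P - 1) \<longleftrightarrow> r + 2 * a = 2 * P - 1"
    by (auto; presburger)
  show ?case unfolding e Suc.IH r m using gen[OF p \<open>n mod 2 < 2\<close>] by simp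
qed

lemma bit_small: "(n::nat) < 2^j \<Longrightarrow> \<not> bit n j"
  by (simp add: bit_iff_odd)

lemma LW:
  assumes "\<forall>u<c. bit (n::nat) u" "\<not> bit n c"
  shows "bit (Suc n) u \<longleftrightarrow> (u = c \<or> (c < u \<and> bit n u))"
proof -
  have m: "n mod 2^c = 2^c - 1" using assms(1) allbits_mod by blast
  define q where "q = n div 2^c"
  have n: "n = q * 2^c + (2^c - 1)" using m q_def by (metis div_mult_mod_eq)
  have qe: "even q" using assms(2) by (simp add: q_def bit_iff_odd)
  have sn: "Suc n = (q+1) * 2^c" using n by (simp add: algebra_simps)
  have bq: "bit n (c + v) \<longleftrightarrow> bit q v" for v
    by (simp add: q_def bit_iff_odd div_exp_eq)
  have b1: "bit (Suc n) u \<longleftrightarrow> (c \<le> u \<and> bit (q+1) (u - c))"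
    unfolding sn by (metis bit_push_bit_iff_nat push_bit_eq_mult)
  have b2: "bit (q+1) v \<longleftrightarrow> (v = 0 \<or> bit q v)" for v
    using qe by (cases v) (auto simp: bit_Suc bit_0)
  have b3: "c < u \<Longrightarrow> bit n u = bit q (u - c)" for u
    using bq[of "u-c"] by simp
  show ?thesis using b1 b2 b3 by (cases "c < u") auto
qed

definition Wblk :: "nat \<Rightarrow> nat \<Rightarrow> nat set" where
  "Wblk n u = {n - n mod 2^u - 2^u ..< n - n mod 2^u}"

lemma LB:
  assumes "\<not> bit (n::nat) c" "c < u"
  shows "Wblk (Suc n) u = Wblk n u"
proof -
  have "\<not> (\<forall>v<u. bit n v)" using assms by blast
  then have "n mod 2^u \<noteq> 2^u - 1" using allbits_mod by blast
  moreover have "(2::nat)^u \<ge> 1" by simp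
  ultimately have "Suc n mod 2^u = Suc (n mod 2^u)"
    using mod_Suc[of n "2^u"] by auto
  then show ?thesis unfolding Wblk_def by simp
qed

lemma LC:
  assumes "\<forall>u<c. bit (n::nat) u"
  shows "Wblk (Suc n) c = {Suc n - 2^c ..< Suc n}"
proof -
  have m: "n mod 2^c = 2^c - 1" using assms allbits_mod by blast
  moreover have "(2::nat)^c \<ge> 1" by simp
  ultimately have "Suc n mod 2^c = 0"
    using mod_Suc[of n "2^c"] by auto
  then show ?thesis unfolding Wblk_def by simp
qed

lemma LA:
  assumes "\<forall>u\<le>i. bit (n::nat) u"
  shows "Wblk n i \<union> {Suc n - 2^i ..< Suc n} = {Suc n - 2^Suc i ..< Suc n}"
proof -
  have m: "n mod 2^i = 2^i - 1" using assms allbits_mod[of i n] by auto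
  have m2: "n mod 2^Suc i = 2^Suc i - 1" using assms allbits_mod[of "Suc i" n] by auto
  have ge: "2^Suc i - 1 \<le> n" using m2 by (metis mod_less_eq_dividend)
  have p: "(2::nat)^i \<ge> 1" by simp
  show ?thesis unfolding Wblk_def m using ge p by auto
qed

fun ch :: "nat \<Rightarrow> nat \<Rightarrow> nat \<Rightarrow> nat set list" where
  "ch 0 i n = []"
| "ch (Suc d) i n = (if bit n i then {Suc n - 2^Suc i ..< Suc n} # ch d (Suc i) n else [])"

definition F :: "nat \<Rightarrow> nat \<Rightarrow> nat set list" where
  "F d n = {n} # ch d 0 n"

lemma set_smerge: "set (map snd (smerge xs ys)) = set (map snd xs) \<union> set (map snd ys)"
  by (induction xs ys rule: smerge.induct) auto

lemma merge_lemma: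
  assumes "total s = n" "\<forall>u\<le>i. bit n u"
    "set (map snd (W s i)) \<union> set (map snd (Bl s i)) = {Suc n - 2^Suc i ..< Suc n}"
    "\<forall>u>i. bit n u \<longrightarrow> set (map snd (W s u)) = Wblk n u"
    "\<not> bit n (i + d)"
  shows "rlog (merge_seg i s) = rlog s @ ch d i n \<and> total (merge_seg i s) = n \<and>
    (\<forall>u. bit (Suc n) u \<longrightarrow> set (map snd (W (merge_seg i s) u)) = Wblk (Suc n) u)"
  using assms
proof (induction i s arbitrary: d rule: merge_seg.induct)
  case (1 i s)
  obtain d' where d: "d = Suc d'" using 1(3,6) by (cases d) auto
  define r where "r = smerge (W s i) (Bl s i)"
  have sr: "set (map snd r) = {Suc n - 2^Suc i ..< Suc n}" using 1(4) unfolding r_def set_smerge by simp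
  show ?case
  proof (cases "bit n (Suc i)")
    case False
    have ms: "merge_seg i s = s\<lparr>rlog := rlog s @ [set (map snd r)], W := (W s)(Suc i := r)\<rparr>"
      using False 1(2) by (simp add: r_def Let_def)
    have chd: "ch d' (Suc i) n = []" using False by (cases d') auto
    have bi: "bit n i" using 1(3) by simp
    have c: "\<forall>u<Suc i. bit n u" using 1(3) by auto
    show ?thesis
    proof (intro conjI allI impI)
      show "rlog (merge_seg i s) = rlog s @ ch d i n" using ms d chd bi sr by simp
      show "total (merge_seg i s) = n" using ms 1(2) by simp
      fix u assume "bit (Suc n) u"
      then have "u = Suc i \<or> (Suc i < u \<and> bit n u)" using LW[OF c False] by blast
      then show "set (map snd (W (merge_seg i s) u)) = Wblk (Suc n) u"
      proof
        assume "u = Suc i" then show ?thesis using ms sr LC[OF c] by simp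
      next
        assume "Suc i < u \<and> bit n u"
        then show ?thesis using ms 1(5) LB[OF False] by auto
      qed
    qed
  next
    case True
    define s2 where "s2 = s\<lparr>rlog := rlog s @ [set (map snd r)]\<rparr>\<lparr>Bl := (Bl s)(Suc i := r)\<rparr>"
        have ms: "merge_seg i s = merge_seg (Suc i) s2"
      using True 1(2) by (simp add: r_def Let_def s2_def)
    have bi: "bit n i" using 1(3) by simp
    have c: "\<forall>u\<le>Suc i. bit n u" using 1(3) True le_Suc_eq by auto
    have IH: "rlog (merge_seg (Suc i) s2) = rlog s2 @ ch d' (Suc i) n \<and> total (merge_seg (Suc i) s2) = n \<and>
      (\<forall>u. bit (Suc n) u \<longrightarrow> set (map snd (W (merge_seg (Suc i) s2) u)) = Wblk (Suc n) u)"
      unfolding s2_def apply (rule 1(1)[OF r_def refl])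
      using True 1(2,5,6) c d LA[OF c] sr by auto
    show ?thesis using IH ms d bi sr by (simp add: s2_def)
  qed
qed

definition Good :: "nat \<Rightarrow> 'a::linorder bwa \<Rightarrow> bool" where
  "Good n s \<longleftrightarrow> total s = n \<and> rlog s = concat (map (\<lambda>x. F x x) [0..<n]) \<and>
     (\<forall>u. bit n u \<longrightarrow> set (map snd (W s u)) = Wblk n u)"

lemma Good_insert:
  assumes "Good n s"
  shows "Good (Suc n) (bwa_insert v s)"
proof (cases "bit n 0")
  case False
  have bi: "bwa_insert v s = s\<lparr>rlog := rlog s @ [{n}]\<rparr>\<lparr>W := (W s)(0 := [(v,n)])\<rparr>\<lparr>total := Suc n\<rparr>"
    using assms False by (simp add: Good_def bwa_insert_def Let_def)
  have Fn: "F n n = [{n}]" using False by (cases n) (auto simp: F_def)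
  have e: "\<forall>u<0. bit n u" by simp
  show ?thesis unfolding Good_def
  proof (intro conjI allI impI)
    show "total (bwa_insert v s) = Suc n" using bi by simp
    show "rlog (bwa_insert v s) = concat (map (\<lambda>x. F x x) [0..<Suc n])"
      using bi Fn assms by (simp add: Good_def)
    fix u assume "bit (Suc n) u"
    then have "u = 0 \<or> (0 < u \<and> bit n u)" using LW[OF e False] by blast
    then show "set (map snd (W (bwa_insert v s) u)) = Wblk (Suc n) u"
    proof
      assume "u = 0" then show ?thesis using bi LC[OF e] by simp
    next
      assume "0 < u \<and> bit n u" then show ?thesis using bi assms LB[OF False] by (auto simp: Good_def)
    qed
  qed
next
  case True
  define s' where "s' = s\<lparr>rlog := rlog s @ [{n}]\<rparr>\<lparr>Bl := (Bl s)(0 := [(v,n)])\<rparr>"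
  have bi: "bwa_insert v s = (merge_seg 0 s')\<lparr>total := Suc n\<rparr>"
    using assms True by (simp add: Good_def bwa_insert_def Let_def s'_def)
  have nb: "\<not> bit n (0 + n)" using bit_small[of n n] by simp
  have c: "\<forall>u\<le>0. bit n u" using True by simp
  have M: "rlog (merge_seg 0 s') = rlog s' @ ch n 0 n \<and> total (merge_seg 0 s') = n \<and>
    (\<forall>u. bit (Suc n) u \<longrightarrow> set (map snd (W (merge_seg 0 s') u)) = Wblk (Suc n) u)"
    apply (rule merge_lemma[OF _ c _ _ nb])
    using assms LA[OF c] True by (auto simp: s'_def Good_def)
  show ?thesis using M bi assms by (simp add: Good_def s'_def F_def)
qed

lemma Good_run: "Good (length vs) (bwa_run vs)"
proof (induction vs rule: rev_induct)
  case Nil then show ?case by (simp add: Good_def bwa_run_def bwa_init_def)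
next
  case (snoc x xs)
  then show ?case using Good_insert[OF snoc] by (simp add: bwa_run_def)
qed

lemma ch_Suc: "ch (Suc d) i n = ch d i n @
   (if \<forall>t\<le>d. bit n (i+t) then [{Suc n - 2^(i+d+1) ..< Suc n}] else [])"
proof (induction d arbitrary: i)
  case 0 then show ?case by simp
next
  case (Suc d)
  have e: "(\<forall>t\<le>Suc d. bit n (i+t)) \<longleftrightarrow> bit n i \<and> (\<forall>t\<le>d. bit n (Suc i+t))"
  proof
    assume H: "\<forall>t\<le>Suc d. bit n (i+t)"
    show "bit n i \<and> (\<forall>t\<le>d. bit n (Suc i+t))"
    proof (intro conjI allI impI)
      show "bit n i" using H[rule_format, of 0] by simp
      fix t assume "t \<le> d" then show "bit n (Suc i + t)" using H[rule_format, of "Suc t"] by simp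
    qed
  next
    assume H: "bit n i \<and> (\<forall>t\<le>d. bit n (Suc i+t))"
    show "\<forall>t\<le>Suc d. bit n (i+t)"
    proof (intro allI impI)
      fix t assume "t \<le> Suc d" then show "bit n (i+t)" using H by (cases t) auto
    qed
  qed
  show ?case using Suc[of "Suc i"] e by auto
qed

lemma F_Suc: "F (Suc j) n = F j n @
   (if \<forall>t\<le>j. bit n t then [{Suc n - 2^(Suc j) ..< Suc n}] else [])"
  using ch_Suc[of j 0 n] by (simp add: F_def)

lemma F_stable: assumes "n < 2^e" "e \<le> d" shows "F d n = F e n"
  using assms(2)
proof (induction d rule: dec_induct)
  case base then show ?case by simp
next
  case (step d)
  have "n < 2^d" using step(1) assms(1) by (meson order_less_le_trans power_increasing one_le_numeral)
  then have "\<not> bit n d" by (rule bit_small)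
  then show ?case using step F_Suc[of d n] by auto
qed

lemma leaves_mk: "leaves (mk_tree j m) = {m*2^j ..< (m+1)*2^j}"
proof (induction j arbitrary: m)
  case 0 then show ?case by auto
next
  case (Suc j)
  show ?case using Suc[of "2*m"] Suc[of "2*m+1"] by (auto simp: algebra_simps)
qed

lemma concat_map_app: "(\<forall>x\<in>set ys. B x = []) \<Longrightarrow>
  concat (map (\<lambda>x. A x @ B x) (ys @ [z])) = concat (map A (ys @ [z])) @ B z"
  by (induction ys) auto

lemma tree_lemma: "map leaves (postorder (mk_tree j m)) = concat (map (F j) [m*2^j ..< (m+1)*2^j])"
proof (induction j arbitrary: m)
  case 0 then show ?case by (simp add: F_def)
next
  case (Suc j)
  define L :: nat where "L = 2^j"
  define a where "a = m * (2*L)"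
  have L1: "L \<ge> 1" by (simp add: L_def)
  have l1: "2*m*2^j = a" "(2*m+1)*2^j = a + L" "(2*m+1+1)*2^j = a + L + L"
    by (simp_all add: a_def L_def algebra_simps)
  have l2: "m * 2^Suc j = a" "(m+1)*2^Suc j = a + L + L" by (simp_all add: a_def L_def algebra_simps)
  have lhs: "map leaves (postorder (mk_tree (Suc j) m)) =
     concat (map (F j) [a..<a+L+L]) @ [{a..<a+L+L}]"
    using Suc[of "2*m"] Suc[of "2*m+1"] leaves_mk[of "Suc j" m] l1 l2
    by (simp del: mk_tree.simps add: upt_add_eq_append[of a "a+L" L]) (simp add: algebra_simps mult_2_right)
  have sp: "[a..<a+L+L] = [a..<a+L+L-1] @ [a+L+L-1]" using L1
  proof -
    have e: "a+L+L = Suc (a+L+L-1)" using L1 by simp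
    have "[a..<a+L+L] = [a..<Suc (a+L+L-1)]" using e by (rule arg_cong)
    also have "\<dots> = [a..<a+L+L-1] @ [a+L+L-1]" by (rule upt_Suc_append) (use L1 in simp)
    finally show ?thesis .
  qed
  have modx: "x mod 2^Suc j = x - a" if "a \<le> x" "x < a+L+L" for x
  proof -
    have h1: "x = (x - a) + m * 2^Suc j" using that l2 by simp
    have h2: "x - a < 2^Suc j" using that by (simp add: L_def)
    have "x mod 2^Suc j = ((x - a) + m * 2^Suc j) mod 2^Suc j" using h1 by (rule arg_cong)
    also have "\<dots> = (x - a) mod 2^Suc j" by (rule mod_mult_self1)
    also have "\<dots> = x - a" using h2 by (rule mod_less)
    finally show ?thesis .
  qed
  have allb: "(\<forall>t\<le>j. bit x t) \<longleftrightarrow> x mod 2^Suc j = 2^Suc j - 1" for x :: nat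
  proof -
    have "(\<forall>t\<le>j. bit x t) \<longleftrightarrow> (\<forall>t<Suc j. bit x t)" using less_Suc_eq_le by blast
    also have "\<dots> \<longleftrightarrow> x mod 2^Suc j = 2^Suc j - 1" by (rule allbits_mod)
    finally show ?thesis .
  qed
  have none: "\<forall>x\<in>set [a..<a+L+L-1]. (if \<forall>t\<le>j. bit x t then [{Suc x - 2^(Suc j) ..< Suc x}] else []) = []"
    using modx allb by (auto simp: L_def)
  have last: "(\<forall>t\<le>j. bit (a+L+L-1) t)"
  proof -
    have m1: "(a+L+L-1) mod 2^Suc j = a+L+L-1-a" by (rule modx) (use L1 in simp)+
    have m2: "a+L+L-1-a = 2^Suc j - 1" by (simp add: L_def)
    show ?thesis unfolding allb using m1 m2 by linarith
  qed
  have rhs: "concat (map (F (Suc j)) [a..<a+L+L]) = concat (map (F j) [a..<a+L+L]) @ [{a..<a+L+L}]"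
    unfolding F_Suc sp
    apply (subst concat_map_app[OF none])
    using last L1 by (simp add: L_def)
  show ?case by (simp only: l2 lhs rhs)
qed

theorem mainTheorem5:
  fixes vs :: "'a::linorder list" and k :: nat
  assumes "length vs = 2 ^ k"
  shows "rlog (bwa_run vs) = map leaves (postorder (mk_tree k 0))"
proof -
  have "rlog (bwa_run vs) = concat (map (\<lambda>x. F x x) [0..<2^k])"
    using Good_run[of vs] assms by (simp add: Good_def)
  also have "\<dots> = concat (map (F k) [0..<2^k])"
  proof (rule arg_cong[where f=concat], rule map_cong[OF refl])
    fix x assume "x \<in> set [0..<(2::nat)^k]"
    then have xk: "x < 2^k" by simp
    have xx: "x < 2^x" by simp
    show "F x x = F k x"
      using F_stable[OF xk, of "max x k"] F_stable[OF xx, of "max x k"] by simp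
  qed
  also have "\<dots> = map leaves (postorder (mk_tree k 0))"
    using tree_lemma[of k 0] by simp
  finally show ?thesis .
qed

end
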